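(* Let $d\ge2$ and let $\mathcal{H}\subset\mathbf{P}^{2^d-1}$ be the image of the Segre embedding of the product $\mathbf{P}^1\times\cdots\times\mathbf{P}^1$ of $d$ copies of the projective line over $\mathbf{F}_q$. Let $s$ be an integer with $0\le s<q$. Then the evaluation code $C_{\mathcal{H}}(s)$ has parameters $[(q+1)^d,(s+1)^d,(q-s+1)^d]$, and it is (up to permutation of coordinates) the $d$-fold tensor product $C_{\mathbf{P}^1}(s)\otimes\cdots\otimes C_{\mathbf{P}^1}(s)$ of the extended Reed--Solomon code $C_{\mathbf{P}^1}(s)$.
   Context: The Segre embedding sends $((u_1:v_1),\dots,(u_d:v_d))$ to the point of $\mathbf{P}^{2^d-1}$ whose coordinates, indexed by subsets $S\subseteq\{1,\dots,d\}$, are $\prod_{j\in S}u_j\prod_{j\notin S}v_j$. For a smooth projective variety $X\subset\mathbf{P}^r$ over $\mathbf{F}_q$ and $s\ge0$, $C_X(s)\subseteq\mathbf{F}_q^n$ is the image of the map sending a homogeneous polynomial $f\in\mathbf{F}_q[x_0,\dots,x_r]$ of degree $s$ to $(f(P_1),\dots,f(P_n))$, where $P_1,\dots,P_n$ are the $\mathbf{F}_q$-rational points of $X$ and $f(P)$ is evaluated at the representative of $P$ whose first nonzero coordinate from the left is $1$. $C_{\mathbf{P}^1}(s)$ (evaluation of binary forms of degree $s$ at $\mathbf{P}^1(\mathbf{F}_q)$) is the extended Reed--Solomon code with parameters $[q+1,s+1,q-s+1]$. Parameters $[n,k,d]$ denote length, dimension, minimum Hamming distance. *)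

theory Defs
  imports Complex_Main "HOL-Library.FuncSet" "HOL-Library.Function_Algebras"
begin

definition wscale :: "'a::field \<Rightarrow> ('i \<Rightarrow> 'a) \<Rightarrow> ('i \<Rightarrow> 'a)" where
  "wscale c w = (\<lambda>i. c * w i)"

text \<open>F_q-rational points of P^r, coordinates x_0,...,x_r (x i = 0 for i > r),
  each point given by its representative whose first nonzero coordinate from the left is 1.\<close>
definition proj_points :: "nat \<Rightarrow> (nat \<Rightarrow> 'a::field) set" where
  "proj_points r = {x. (\<forall>i>r. x i = 0) \<and>
      (\<exists>i\<le>r. x i = 1 \<and> (\<forall>j<i. x j = 0))}"

definition monomials :: "nat \<Rightarrow> nat \<Rightarrow> (nat \<Rightarrow> nat) set" where
  "monomials r s = {e. (\<forall>i>r. e i = 0) \<and> (\<Sum>i\<le>r. e i) = s}"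

text \<open>A homogeneous polynomial of degree s in x_0..x_r is given by its coefficient
  function on monomials; this is its value at a point x.\<close>
definition hom_eval :: "nat \<Rightarrow> nat \<Rightarrow> ((nat \<Rightarrow> nat) \<Rightarrow> 'a::field) \<Rightarrow> (nat \<Rightarrow> 'a) \<Rightarrow> 'a" where
  "hom_eval r s c x = (\<Sum>e\<in>monomials r s. c e * (\<Prod>i\<le>r. x i ^ e i))"

text \<open>Evaluation code C_X(s) of a set X of rational points of P^r; codewords are
  words indexed by the points of X (and 0 outside X).\<close>
definition eval_code :: "nat \<Rightarrow> (nat \<Rightarrow> 'a::field) set \<Rightarrow> nat \<Rightarrow> ((nat \<Rightarrow> 'a) \<Rightarrow> 'a) set" where
  "eval_code r X s = {(\<lambda>P. if P \<in> X then hom_eval r s c P else 0) | c. True}"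

definition code_dim :: "('i \<Rightarrow> 'a::field) set \<Rightarrow> nat" where
  "code_dim C = vector_space.dim wscale C"

definition weight :: "('i \<Rightarrow> 'a::zero) \<Rightarrow> nat" where
  "weight w = card {i. w i \<noteq> 0}"

definition min_dist :: "('i \<Rightarrow> 'a::zero) set \<Rightarrow> nat" where
  "min_dist C = Min {weight w | w. w \<in> C \<and> w \<noteq> 0}"

text \<open>Segre embedding of d copies of P^1 (factors indexed 0..d-1, factor j corresponding
  to factor j+1 of the paper, with (u_j : v_j) = (p j 0 : p j 1)).
  The coordinate with index k < 2^d corresponds to the subset
  S(k) = {j<d. binary digit of k at position d-1-j is 0}, so x_0 is the product of all u_j.\<close>
definition segre_subset :: "nat \<Rightarrow> nat \<Rightarrow> nat set" where
  "segre_subset d k = {j. j < d \<and> (k div 2 ^ (d - 1 - j)) mod 2 = 0}"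

definition segre :: "nat \<Rightarrow> (nat \<Rightarrow> nat \<Rightarrow> 'a::field) \<Rightarrow> (nat \<Rightarrow> 'a)" where
  "segre d p = (\<lambda>k. if k < 2 ^ d
      then (\<Prod>j<d. if j \<in> segre_subset d k then p j 0 else p j 1) else 0)"

definition P1_power :: "nat \<Rightarrow> (nat \<Rightarrow> nat \<Rightarrow> 'a::field) set" where
  "P1_power d = PiE {..<d} (\<lambda>_. proj_points 1)"

definition segre_points :: "nat \<Rightarrow> (nat \<Rightarrow> 'a::field) set" where
  "segre_points d = {x \<in> proj_points (2 ^ d - 1).
      \<exists>p\<in>P1_power d. \<exists>a. a \<noteq> 0 \<and> x = (\<lambda>k. a * segre d p k)}"

definition tensor_power :: "nat \<Rightarrow> 'i set \<Rightarrow> ('i \<Rightarrow> 'a::field) set \<Rightarrow> ((nat \<Rightarrow> 'i) \<Rightarrow> 'a) set" where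
  "tensor_power d I C = module.span wscale
     {(\<lambda>t. if t \<in> PiE {..<d} (\<lambda>_. I) then (\<Prod>j<d. c j (t j)) else 0) | c. \<forall>j<d. c j \<in> C}"

end

theory Submission
  imports Defs "HOL-Computational_Algebra.Polynomial"
begin


interpretation W: vector_space "wscale :: 'a::field \<Rightarrow> ('i \<Rightarrow> 'a) \<Rightarrow> ('i \<Rightarrow> 'a)"
  by unfold_locales (auto simp: wscale_def fun_eq_iff algebra_simps)

lemma sum_fun_apply: "(\<Sum>m\<in>M. f m) x = (\<Sum>m\<in>M. f m x)"
  by (induction M rule: infinite_finite_induct) auto

definition pt :: "'a::field \<Rightarrow> nat \<Rightarrow> 'a" where
  "pt a = (\<lambda>i. if i = 0 then 1 else if i = 1 then a else 0)"
definition ipt :: "nat \<Rightarrow> 'a::field" where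
  "ipt = (\<lambda>i. if i = 1 then 1 else 0)"

lemma P1_eq: "proj_points 1 = range pt \<union> {ipt}"
proof (rule set_eqI, rule iffI)
  fix x :: "nat \<Rightarrow> 'a" assume "x \<in> proj_points 1"
  then obtain i where h: "\<forall>i>1. x i = 0" "i \<le> 1" "x i = 1" "\<forall>j<i. x j = 0"
    by (auto simp: proj_points_def)
  show "x \<in> range pt \<union> {ipt}"
  proof (cases "i = 0")
    case True
    then have "x = pt (x 1)" using h by (auto simp: pt_def fun_eq_iff)
    then show ?thesis by auto
  next
    case False
    then have "i = 1" using h by auto
    have "x = ipt"
    proof
      fix k show "x k = ipt k" using h \<open>i = 1\<close> h(1)[rule_format, of k]
        by (cases "k = 0"; cases "k = 1") (auto simp: ipt_def)
    qed
    then show ?thesis by auto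
  qed
next
  fix x :: "nat \<Rightarrow> 'a" assume "x \<in> range pt \<union> {ipt}"
  then show "x \<in> proj_points 1"
  proof
    assume "x \<in> range pt" then show ?thesis
      unfolding proj_points_def by (auto simp: pt_def intro!: exI[of _ 0])
  next
    assume "x \<in> {ipt}" then show ?thesis
      unfolding proj_points_def by (auto simp: ipt_def intro!: exI[of _ 1])
  qed
qed

lemma pt_inj: "inj pt"
  by (auto simp: inj_def pt_def fun_eq_iff dest: spec[of _ 1])

lemma ipt_ne: "ipt \<noteq> pt x"
proof
  assume "ipt = pt x"
  then have "ipt 0 = pt x 0" by simp
  then show False by (simp add: pt_def ipt_def)
qed

lemma ipt_notin: "ipt \<notin> range pt"
  using ipt_ne by fastforce

lemma card_P1: "card (proj_points 1 :: (nat \<Rightarrow> 'a::{finite,field}) set) = card (UNIV :: 'a set) + 1"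
  unfolding P1_eq using ipt_notin pt_inj
  by (simp add: card_insert_if card_image[OF pt_inj])

lemma finite_P1: "finite (proj_points 1 :: (nat \<Rightarrow> 'a::{finite,field}) set)"
  unfolding P1_eq by simp

definition phi :: "nat \<Rightarrow> nat \<Rightarrow> (nat \<Rightarrow> 'a::field) \<Rightarrow> 'a" where
  "phi s i p = p 0 ^ i * p 1 ^ (s - i)"

definition uni :: "nat \<Rightarrow> (nat \<Rightarrow> 'a::field) \<Rightarrow> (nat \<Rightarrow> 'a) \<Rightarrow> 'a" where
  "uni s b p = (\<Sum>i\<le>s. b i * phi s i p)"

definition upoly :: "nat \<Rightarrow> (nat \<Rightarrow> 'a::field) \<Rightarrow> 'a poly" where
  "upoly s b = (\<Sum>k\<le>s. monom (b (s - k)) k)"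

lemma coeff_upoly: "coeff (upoly s b) k = (if k \<le> s then b (s - k) else 0)"
  unfolding upoly_def coeff_sum coeff_monom
  by (auto simp: sum.delta' if_distrib cong: if_cong)

lemma uni_pt: "uni s b (pt x) = poly (upoly s b) x"
proof -
  have "uni s b (pt x) = (\<Sum>i\<le>s. b i * x ^ (s - i))"
    by (simp add: uni_def phi_def pt_def)
  also have "\<dots> = (\<Sum>k\<le>s. b (s - k) * x ^ k)"
    by (rule sum.reindex_bij_witness[of _ "\<lambda>k. s - k" "\<lambda>i. s - i"]) auto
  also have "\<dots> = poly (upoly s b) x"
    by (simp add: upoly_def poly_sum poly_monom)
  finally show ?thesis .
qed

lemma uni_ipt: "uni s b ipt = b 0"
proof -
  have "uni s b ipt = (\<Sum>i\<le>s. if i = 0 then b i else 0)"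
    unfolding uni_def by (rule sum.cong) (auto simp: phi_def ipt_def)
  then show ?thesis by simp
qed

lemma zeros_bound:
  fixes b :: "nat \<Rightarrow> 'a::{finite,field}"
  assumes "\<exists>i\<le>s. b i \<noteq> 0"
  shows "card {p \<in> proj_points 1. uni s b p = 0} \<le> s"
proof -
  obtain i where i: "i \<le> s" "b i \<noteq> 0" using assms by auto
  let ?g = "upoly s b"
  have gnz: "?g \<noteq> 0"
  proof
    assume "?g = 0"
    then have "coeff ?g (s - i) = 0" by simp
    then show False using i by (simp add: coeff_upoly)
  qed
  have degs: "degree ?g \<le> s" by (rule degree_le) (auto simp: coeff_upoly)
  have eq: "{p \<in> proj_points 1. uni s b p = 0} = pt ` {x. poly ?g x = 0} \<union> (if b 0 = 0 then {ipt} else {})"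
    unfolding P1_eq by (auto simp: uni_pt uni_ipt)
  have cr: "card (pt ` {x. poly ?g x = 0}) \<le> degree ?g"
    using card_poly_roots_bound[OF gnz] card_image_le[of "{x. poly ?g x = 0}" pt] by simp
  show ?thesis
  proof (cases "b 0 = 0")
    case False
    then show ?thesis using eq cr degs by simp
  next
    case True
    then have "s \<noteq> 0" using i by (cases "i = 0") auto
    have "degree ?g \<le> s - 1" using True by (intro degree_le) (auto simp: coeff_upoly)
    have "card {p \<in> proj_points 1. uni s b p = 0} \<le> card (pt ` {x. poly ?g x = 0}) + card {ipt :: nat \<Rightarrow> 'a}"
      unfolding eq using True by (simp add: card_insert_if)
    then show ?thesis using cr \<open>degree ?g \<le> s - 1\<close> \<open>s \<noteq> 0\<close> by simp
  qed
qed

lemma PiE_Suc_upd: "g \<in> PiE {..<(d::nat)} A \<Longrightarrow> y \<in> A d \<Longrightarrow> g(d := y) \<in> PiE {..<Suc d} A"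
  by (auto simp: PiE_def extensional_def Pi_def)

lemma PiE_Suc_res: "t \<in> PiE {..<Suc (d::nat)} A \<Longrightarrow> t(d := undefined) \<in> PiE {..<d} A \<and> t d \<in> A d"
  by (auto simp: PiE_def extensional_def Pi_def)

lemma PiE_Suc_undef: assumes "g \<in> PiE {..<(d::nat)} A" shows "g d = undefined"
  by (rule PiE_arb[OF assms]) simp

lemma upd_undef_eq: "(t(d := undefined))(d := t d) = t"
  by auto

lemma upd_inj: "g \<in> PiE {..<(d::nat)} A \<Longrightarrow> h \<in> PiE {..<d} B \<Longrightarrow> g(d := y) = h(d := z) \<Longrightarrow> g = h \<and> y = z"
  using PiE_Suc_undef[of g d A] PiE_Suc_undef[of h d B]
  by (metis fun_upd_idem fun_upd_upd fun_upd_same)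

definition Mset :: "nat \<Rightarrow> nat \<Rightarrow> (nat \<Rightarrow> nat) set" where
  "Mset d s = PiE {..<d} (\<lambda>_. {..s})"

definition mpoly :: "nat \<Rightarrow> nat \<Rightarrow> ((nat \<Rightarrow> nat) \<Rightarrow> 'a::field) \<Rightarrow> (nat \<Rightarrow> nat \<Rightarrow> 'a) \<Rightarrow> 'a" where
  "mpoly d s a t = (\<Sum>m\<in>Mset d s. a m * (\<Prod>j<d. phi s (m j) (t j)))"

lemma finite_Mset: "finite (Mset d s)"
  by (simp add: Mset_def finite_PiE)

lemma card_Mset: "card (Mset d s) = (s + 1) ^ d"
  by (simp add: Mset_def card_PiE)

lemma mpoly_Suc:
  "mpoly (Suc d) s a (t(d := p)) = (\<Sum>i\<le>s. phi s i p * mpoly d s (\<lambda>m. a (m(d := i))) t)"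
proof -
  have ms: "Mset (Suc d) s = (\<lambda>(y, g). g(d := y)) ` ({..s} \<times> Mset d s)"
    unfolding Mset_def lessThan_Suc by (rule PiE_insert_eq)
  have inj: "inj_on (\<lambda>(y, g). g(d := y)) ({..s} \<times> Mset d s)"
    unfolding Mset_def by (rule inj_combinator) simp
  have "mpoly (Suc d) s a (t(d := p)) =
      (\<Sum>(i, g)\<in>{..s} \<times> Mset d s. a (g(d := i)) * (\<Prod>j<Suc d. phi s ((g(d := i)) j) ((t(d := p)) j)))"
    unfolding mpoly_def ms by (subst sum.reindex[OF inj]) (simp add: case_prod_unfold)
  also have "\<dots> = (\<Sum>(i, g)\<in>{..s} \<times> Mset d s. phi s i p * (a (g(d := i)) * (\<Prod>j<d. phi s (g j) (t j))))"
  proof (rule sum.cong[OF refl], clarify)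
    fix i g
    have "(\<Prod>j<d. phi s ((g(d := i)) j) ((t(d := p)) j)) = (\<Prod>j<d. phi s (g j) (t j))"
      by (rule prod.cong) auto
    then show "a (g(d := i)) * (\<Prod>j<Suc d. phi s ((g(d := i)) j) ((t(d := p)) j)) =
       phi s i p * (a (g(d := i)) * (\<Prod>j<d. phi s (g j) (t j)))"
      by (simp add: prod.lessThan_Suc)
  qed
  also have "\<dots> = (\<Sum>i\<le>s. phi s i p * mpoly d s (\<lambda>m. a (m(d := i))) t)"
    by (simp add: sum.cartesian_product[symmetric] mpoly_def sum_distrib_left)
  finally show ?thesis .
qed

lemma mpoly_lin: "mpoly d s (\<lambda>m. \<Sum>i\<in>I. f i * g i m) t = (\<Sum>i\<in>I. f i * mpoly d s (g i) t)"
  unfolding mpoly_def by (simp add: sum_distrib_left sum_distrib_right sum.swap[of _ I] mult.assoc)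

lemma mpoly_indep:
  fixes a :: "(nat \<Rightarrow> nat) \<Rightarrow> 'a::{finite,field}"
  assumes s: "s \<le> card (UNIV :: 'a set)"
    and z: "\<forall>t\<in>P1_power d. mpoly d s a t = (0 :: 'a)"
  shows "\<forall>m\<in>Mset d s. a m = 0"
  using z
proof (induction d arbitrary: a)
  case 0
  have "Mset 0 s = {\<lambda>_. undefined}" by (simp add: Mset_def)
  moreover have "P1_power 0 = {\<lambda>_. undefined}" by (simp add: P1_power_def)
  ultimately show ?case using 0 by (auto simp: mpoly_def)
next
  case (Suc d)
  have coef: "mpoly d s (\<lambda>m. a (m(d := i))) t' = 0" if t': "t' \<in> P1_power d" and i: "i \<le> s" for t' i
  proof (rule ccontr)
    assume nz: "mpoly d s (\<lambda>m. a (m(d := i))) t' \<noteq> 0"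
    let ?b = "\<lambda>i. mpoly d s (\<lambda>m. a (m(d := i))) t'"
    have "\<forall>p\<in>proj_points 1. uni s ?b p = 0"
    proof
      fix p :: "nat \<Rightarrow> 'a" assume p: "p \<in> proj_points 1"
      have "t'(d := p) \<in> P1_power (Suc d)"
        using t' p unfolding P1_power_def by (rule PiE_Suc_upd)
      then have "mpoly (Suc d) s a (t'(d := p)) = 0" using Suc.prems by blast
      then show "uni s ?b p = 0" unfolding mpoly_Suc uni_def by (simp add: mult.commute)
    qed
    then have "{p \<in> proj_points 1. uni s ?b p = 0} = proj_points 1" by auto
    moreover have "card {p \<in> proj_points 1. uni s ?b p = 0} \<le> s"
      using nz i by (intro zeros_bound) auto
    ultimately show False using s card_P1[where 'a='a] by simp
  qed
  show ?case
  proof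
    fix m assume m: "m \<in> Mset (Suc d) s"
    then have m': "m(d := undefined) \<in> Mset d s" "m d \<le> s"
      using PiE_Suc_res[of m d "\<lambda>_. {..s}"] by (auto simp: Mset_def)
    have "\<forall>m'\<in>Mset d s. a (m'(d := m d)) = 0"
      using Suc.IH[of "\<lambda>m'. a (m'(d := m d))"] coef m'(2) by blast
    then have "a ((m(d := undefined))(d := m d)) = 0" using m'(1) by blast
    then show "a m = 0" by simp
  qed
qed

lemma finite_X: "finite (P1_power d :: (nat \<Rightarrow> nat \<Rightarrow> 'a::{finite,field}) set)"
  unfolding P1_power_def by (intro finite_PiE finite_P1) auto

lemma card_X: "card (P1_power d :: (nat \<Rightarrow> nat \<Rightarrow> 'a::{finite,field}) set) = (card (UNIV :: 'a set) + 1) ^ d"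
  unfolding P1_power_def by (simp add: card_PiE card_P1[simplified])

lemma mpoly_weight:
  fixes a :: "(nat \<Rightarrow> nat) \<Rightarrow> 'a::{finite,field}"
  assumes "t0 \<in> P1_power d" "mpoly d s a t0 \<noteq> 0"
  shows "(card (UNIV :: 'a set) + 1 - s) ^ d \<le> card {t \<in> P1_power d. mpoly d s a t \<noteq> 0}"
  using assms
proof (induction d arbitrary: a t0)
  case 0
  have "(P1_power 0 :: (nat \<Rightarrow> nat \<Rightarrow> 'a) set) = {\<lambda>_. undefined}" by (simp add: P1_power_def)
  note h = this
  have "t0 = (\<lambda>_. undefined)" using 0(1) h by simp
  then have "{t \<in> P1_power 0. mpoly 0 s a t \<noteq> 0} \<subseteq> {t0}" using h by auto
  moreover have "t0 \<in> {t \<in> P1_power 0. mpoly 0 s a t \<noteq> 0}" using 0 by blast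
  ultimately have "{t \<in> P1_power 0. mpoly 0 s a t \<noteq> 0} = {t0}" by blast
  then show ?case by simp
next
  case (Suc d)
  let ?q1 = "card (UNIV :: 'a set) + 1"
  define t0' where "t0' = t0(d := undefined)"
  have t0': "t0' \<in> P1_power d" "t0 d \<in> proj_points 1"
    using PiE_Suc_res[of t0 d] Suc.prems(1) by (auto simp: t0'_def P1_power_def)
  define b where "b = (\<lambda>i. mpoly d s (\<lambda>m. a (m(d := i))) t0')"
  define c where "c = (\<lambda>p m. \<Sum>i\<le>s. phi s i p * a (m(d := i)))"
  have cval: "mpoly d s (c p) t' = mpoly (Suc d) s a (t'(d := p))" for p t'
    unfolding c_def mpoly_lin mpoly_Suc ..
  have cb: "mpoly d s (c p) t0' = uni s b p" for p
    unfolding c_def mpoly_lin uni_def b_def by (simp add: mult.commute)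
  have "uni s b (t0 d) \<noteq> 0"
    using Suc.prems(2) by (simp add: cb[symmetric] cval t0'_def)
  then have bnz: "\<exists>i\<le>s. b i \<noteq> 0"
  proof (rule contrapos_np)
    assume "\<not> (\<exists>i\<le>s. b i \<noteq> 0)"
    then show "uni s b (t0 d) = 0" unfolding uni_def by (intro sum.neutral) auto
  qed
  define Y where "Y = {p \<in> proj_points 1. uni s b p \<noteq> 0}"
  define Z where "Z = {p \<in> proj_points 1. uni s b p = 0}"
  have "card (proj_points 1 :: (nat \<Rightarrow> 'a) set) = card Y + card Z"
    unfolding Y_def Z_def
    by (subst card_Un_disjoint[symmetric]) (auto intro: finite_subset[OF _ finite_P1] arg_cong[where f=card])
  moreover have "card Z \<le> s" unfolding Z_def by (rule zeros_bound[OF bnz])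
  ultimately have cY: "?q1 - s \<le> card Y" using card_P1[where 'a='a] by simp
  define N where "N = (\<lambda>p. {t' \<in> P1_power d. mpoly d s (c p) t' \<noteq> (0::'a)})"
  have cN: "(?q1 - s) ^ d \<le> card (N p)" if "p \<in> Y" for p
    unfolding N_def using that by (intro Suc.IH[OF t0'(1)]) (simp add: cb Y_def)
  have inj: "inj_on (\<lambda>(p, t'). t'(d := p)) (Sigma Y N)"
    by (rule inj_onI) (auto simp: N_def P1_power_def dest: upd_inj)
  have sub: "(\<lambda>(p, t'). t'(d := p)) ` (Sigma Y N) \<subseteq> {t \<in> P1_power (Suc d). mpoly (Suc d) s a t \<noteq> 0}"
  proof (rule subsetI)
    fix x assume "x \<in> (\<lambda>(p, t'). t'(d := p)) ` (Sigma Y N)"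
    then obtain p t' where pt: "p \<in> Y" "t' \<in> N p" "x = t'(d := p)" by auto
    have "t'(d := p) \<in> P1_power (Suc d)"
      using pt(1,2) unfolding N_def Y_def P1_power_def by (intro PiE_Suc_upd) auto
    moreover have "mpoly (Suc d) s a (t'(d := p)) \<noteq> 0"
      using pt(2) unfolding N_def cval by simp
    ultimately show "x \<in> {t \<in> P1_power (Suc d). mpoly (Suc d) s a t \<noteq> 0}" using pt(3) by simp
  qed
  have finN: "finite (N p)" for p unfolding N_def by (rule finite_subset[OF _ finite_X]) auto
  have finY: "finite Y" unfolding Y_def by (rule finite_subset[OF _ finite_P1]) auto
  have "(?q1 - s) ^ Suc d \<le> card Y * (?q1 - s) ^ d" using cY by simp
  also have "\<dots> = (\<Sum>p\<in>Y. (?q1 - s) ^ d)" by simp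
  also have "\<dots> \<le> (\<Sum>p\<in>Y. card (N p))" by (rule sum_mono) (rule cN)
  also have "\<dots> = card (Sigma Y N)" using finY finN by (simp add: card_SigmaI)
  also have "\<dots> = card ((\<lambda>(p, t'). t'(d := p)) ` (Sigma Y N))" by (rule card_image[OF inj, symmetric])
  also have "\<dots> \<le> card {t \<in> P1_power (Suc d). mpoly (Suc d) s a t \<noteq> 0}"
    by (rule card_mono[OF _ sub]) (rule finite_subset[OF _ finite_X], auto)
  finally show ?case .
qed

lemma uni_word:
  assumes s: "s < card (UNIV :: 'a::{finite,field} set)"
  obtains b :: "nat \<Rightarrow> 'a::{finite,field}" where "\<exists>p\<in>proj_points 1. uni s b p \<noteq> 0"
    "card {p \<in> proj_points 1. uni s b p \<noteq> 0} \<le> card (UNIV :: 'a set) + 1 - s"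
proof -
  obtain h :: "nat \<Rightarrow> 'a" where h: "bij_betw h {0..<card (UNIV :: 'a set)} UNIV"
    using ex_bij_betw_nat_finite[of "UNIV :: 'a set"] by auto
  have hinj: "inj_on h {..<s}"
    by (rule inj_on_subset[OF bij_betw_imp_inj_on[OF h]]) (use s in auto)
  define g where "g = (\<Prod>k<s. [:- h k, 1:])"
  define b where "b = (\<lambda>i. coeff g (s - i))"
  have dg: "degree g \<le> s"
    unfolding g_def using degree_prod_sum_le[of "{..<s}" "\<lambda>k. [:- h k, 1:]"] by simp
  have gnz: "g \<noteq> 0" unfolding g_def by (simp add: prod_zero_iff)
  have ug: "upoly s b = g"
  proof (rule poly_eqI)
    fix n show "coeff (upoly s b) n = coeff g n"
      using dg coeff_eq_0[of g n] by (auto simp: coeff_upoly b_def)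
  qed
  have bnz: "\<exists>i\<le>s. b i \<noteq> 0"
  proof (rule ccontr)
    assume "\<not> (\<exists>i\<le>s. b i \<noteq> 0)"
    then have "coeff g k = 0" for k
      using dg by (cases "k \<le> s") (auto simp: b_def coeff_eq_0 dest: spec[of _ "s - k"])
    then have "g = 0" by (simp add: poly_eqI)
    then show False using gnz by simp
  qed
  define Z where "Z = {p \<in> proj_points 1. uni s b p = (0::'a)}"
  define Y where "Y = {p \<in> proj_points 1. uni s b p \<noteq> (0::'a)}"
  have cP: "card (proj_points 1 :: (nat \<Rightarrow> 'a) set) = card Y + card Z"
    unfolding Y_def Z_def
    by (subst card_Un_disjoint[symmetric]) (auto intro: finite_subset[OF _ finite_P1] arg_cong[where f=card])
  have "card Z \<le> s" unfolding Z_def by (rule zeros_bound[OF bnz])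
  have sub: "pt ` h ` {..<s} \<subseteq> Z"
  proof
    fix p assume "p \<in> pt ` h ` {..<s}"
    then obtain k where k: "k < s" "p = pt (h k)" by auto
    have "poly g (h k) = 0" unfolding g_def poly_prod using k(1)
      by (subst prod_zero_iff) auto
    then show "p \<in> Z" unfolding Z_def k(2) P1_eq by (simp add: uni_pt ug)
  qed
  have "card (pt ` h ` {..<s}) = s"
    using hinj pt_inj by (simp add: card_image inj_on_subset[OF pt_inj])
  moreover have "card (pt ` h ` {..<s}) \<le> card Z"
    by (rule card_mono[OF _ sub]) (auto simp: Z_def intro: finite_subset[OF _ finite_P1])
  ultimately have "s \<le> card Z" by simp
  then have "card Y \<le> card (UNIV :: 'a set) + 1 - s" using cP card_P1[where 'a='a] by simp
  moreover have "Y \<noteq> {}" using cP \<open>card Z \<le> s\<close> s card_P1[where 'a='a] by auto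
  ultimately show ?thesis using that[of b] unfolding Y_def by auto
qed

lemma mpoly_prod:
  "mpoly d s (\<lambda>m. \<Prod>j<d. b (m j)) t = (\<Prod>j<d. uni s b (t j))"
  unfolding mpoly_def uni_def Mset_def
  by (subst prod_sum_PiE) (auto simp: prod.distrib)

lemma exists_min_word:
  assumes s: "s < card (UNIV :: 'a::{finite,field} set)"
  shows "\<exists>a. (\<exists>t\<in>P1_power d. mpoly d s a t \<noteq> (0::'a)) \<and>
      card {t \<in> P1_power d. mpoly d s a t \<noteq> (0::'a)} \<le> (card (UNIV :: 'a set) + 1 - s) ^ d"
proof -
  obtain b :: "nat \<Rightarrow> 'a" where b: "\<exists>p\<in>proj_points 1. uni s b p \<noteq> 0"
    "card {p \<in> proj_points 1. uni s b p \<noteq> 0} \<le> card (UNIV :: 'a set) + 1 - s"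
    using uni_word[OF s] by blast
  obtain p0 where p0: "p0 \<in> proj_points 1" "uni s b p0 \<noteq> 0" using b(1) by blast
  define a where "a = (\<lambda>m. \<Prod>j<d. b (m j))"
  have eq: "{t \<in> P1_power d. mpoly d s a t \<noteq> (0::'a)} = PiE {..<d} (\<lambda>_. {p \<in> proj_points 1. uni s b p \<noteq> 0})"
    unfolding a_def mpoly_prod P1_power_def by (auto simp: PiE_def Pi_def)
  have "restrict (\<lambda>_. p0) {..<d} \<in> PiE {..<d} (\<lambda>_. {p \<in> proj_points 1. uni s b p \<noteq> 0})"
    using p0 by auto
  then have "\<exists>t\<in>P1_power d. mpoly d s a t \<noteq> 0" using eq by blast
  moreover have "card {t \<in> P1_power d. mpoly d s a t \<noteq> (0::'a)} \<le> (card (UNIV :: 'a set) + 1 - s) ^ d"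
    unfolding eq using power_mono[OF b(2), of d] by (simp add: card_PiE)
  ultimately show ?thesis by blast
qed

definition ex1 :: "nat \<Rightarrow> nat \<Rightarrow> nat \<Rightarrow> nat" where
  "ex1 s i = (\<lambda>k. if k = 0 then i else if k = 1 then s - i else 0)"

lemma monomials1: "monomials 1 s = ex1 s ` {..s}"
proof (intro set_eqI iffI)
  fix e assume "e \<in> monomials 1 s"
  then have e: "\<forall>i>1. e i = 0" "e 0 + e 1 = s" by (auto simp: monomials_def)
  have "e = ex1 s (e 0)"
  proof
    fix k show "e k = ex1 s (e 0) k" using e e(1)[rule_format, of k]
      by (cases "k = 0"; cases "k = 1") (auto simp: ex1_def)
  qed
  then show "e \<in> ex1 s ` {..s}" using e by auto
next
  fix e assume "e \<in> ex1 s ` {..s}"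
  then show "e \<in> monomials 1 s" by (auto simp: monomials_def ex1_def)
qed

lemma ex1_inj: "inj_on (ex1 s) {..s}"
  by (rule inj_onI) (auto simp: ex1_def fun_eq_iff dest: spec[of _ 0])

lemma hom_eval1: "hom_eval 1 s c p = uni s (\<lambda>i. c (ex1 s i)) p"
  unfolding hom_eval_def monomials1 uni_def
  by (subst sum.reindex[OF ex1_inj]) (simp add: phi_def ex1_def)

lemma R_eq: "eval_code 1 (proj_points 1) s =
   {(\<lambda>p. if p \<in> proj_points 1 then uni s b p else 0) | b. True}"
proof (intro set_eqI iffI)
  fix w assume "w \<in> (eval_code 1 (proj_points 1) s :: ((nat \<Rightarrow> 'a) \<Rightarrow> 'a) set)"
  then obtain c where "w = (\<lambda>P. if P \<in> proj_points 1 then hom_eval 1 s c P else 0)"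
    unfolding eval_code_def by blast
  then show "w \<in> {(\<lambda>p. if p \<in> proj_points 1 then uni s b p else 0) | b. True}"
    unfolding hom_eval1 by blast
next
  fix w assume "w \<in> {(\<lambda>p. if p \<in> proj_points 1 then uni s b p else (0::'a)) | b. True}"
  then obtain b where b: "w = (\<lambda>p. if p \<in> proj_points 1 then uni s b p else 0)" by auto
  have "hom_eval 1 s (\<lambda>e. b (e 0)) = uni s b" unfolding hom_eval1 by (simp add: ex1_def)
  then show "w \<in> eval_code 1 (proj_points 1) s" unfolding eval_code_def b
    by (auto intro!: exI[of _ "\<lambda>e. b (e 0)"])
qed

definition V :: "nat \<Rightarrow> nat \<Rightarrow> ((nat \<Rightarrow> nat \<Rightarrow> 'a::field) \<Rightarrow> 'a) set" where
  "V d s = {(\<lambda>t. if t \<in> P1_power d then mpoly d s a t else 0) | a. True}"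

lemma mpoly_prod_dep:
  "mpoly d s (\<lambda>m. \<Prod>j<d. b j (m j)) t = (\<Prod>j<d. uni s (b j) (t j))"
  unfolding mpoly_def uni_def Mset_def
  by (subst prod_sum_PiE) (auto simp: prod.distrib)

lemma V_subspace: "W.subspace (V d s :: ((nat \<Rightarrow> nat \<Rightarrow> 'a::field) \<Rightarrow> 'a) set)"
proof (rule W.subspaceI)
  show "0 \<in> V d s" unfolding V_def
    by (auto simp: mpoly_def fun_eq_iff intro!: exI[of _ "\<lambda>_. 0"])
next
  fix x y :: "(nat \<Rightarrow> nat \<Rightarrow> 'a) \<Rightarrow> 'a" assume "x \<in> V d s" "y \<in> V d s"
  then obtain a a' where "x = (\<lambda>t. if t \<in> P1_power d then mpoly d s a t else 0)"
     "y = (\<lambda>t. if t \<in> P1_power d then mpoly d s a' t else 0)" by (auto simp: V_def)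
  then show "x + y \<in> V d s" unfolding V_def
    by (auto simp: mpoly_def fun_eq_iff algebra_simps sum.distrib intro!: exI[of _ "\<lambda>m. a m + a' m"])
next
  fix c and x :: "(nat \<Rightarrow> nat \<Rightarrow> 'a) \<Rightarrow> 'a" assume "x \<in> V d s"
  then obtain a where "x = (\<lambda>t. if t \<in> P1_power d then mpoly d s a t else 0)" by (auto simp: V_def)
  then show "wscale c x \<in> V d s" unfolding V_def
    by (auto simp: wscale_def mpoly_def fun_eq_iff algebra_simps sum_distrib_left intro!: exI[of _ "\<lambda>m. c * a m"])
qed

definition E :: "nat \<Rightarrow> nat \<Rightarrow> (nat \<Rightarrow> nat) \<Rightarrow> (nat \<Rightarrow> nat \<Rightarrow> 'a::field) \<Rightarrow> 'a" where
  "E d s m = (\<lambda>t. if t \<in> P1_power d then (\<Prod>j<d. phi s (m j) (t j)) else 0)"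

lemma V_sum_E: "(\<lambda>t. if t \<in> P1_power d then mpoly d s a t else 0) = (\<Sum>m\<in>Mset d s. wscale (a m) (E d s m))"
  by (rule ext) (simp add: sum_fun_apply wscale_def E_def mpoly_def sum.If_cases if_distrib cong: if_cong)

lemma uni_delta: "i \<le> s \<Longrightarrow> uni s (\<lambda>k. if k = i then 1 else 0) p = phi s i p"
  unfolding uni_def by (subst sum.cong[OF refl, of _ _ "\<lambda>k. if k = i then phi s k p else 0"]) auto

lemma tensor_eq: "tensor_power d (proj_points 1) (eval_code 1 (proj_points 1 :: (nat \<Rightarrow> 'a::field) set) s) = V d s"
proof -
  define G :: "((nat \<Rightarrow> nat \<Rightarrow> 'a) \<Rightarrow> 'a) set" where "G = {(\<lambda>t. if t \<in> PiE {..<d} (\<lambda>_. proj_points 1) then (\<Prod>j<d. c j (t j)) else 0) | c.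
       \<forall>j<d. c j \<in> eval_code 1 (proj_points 1) s}"
  have tp: "tensor_power d (proj_points 1) (eval_code 1 (proj_points 1 :: (nat \<Rightarrow> 'a::field) set) s) = W.span G"
    unfolding tensor_power_def G_def ..
  have GV: "G \<subseteq> V d s"
  proof
    fix w assume "w \<in> G"
    then obtain c where c: "\<forall>j<d. c j \<in> eval_code 1 (proj_points 1) s"
      "w = (\<lambda>t. if t \<in> PiE {..<d} (\<lambda>_. proj_points 1) then (\<Prod>j<d. c j (t j)) else 0)"
      unfolding G_def by blast
    have "\<forall>j<d. \<exists>b. c j = (\<lambda>p. if p \<in> proj_points 1 then uni s b p else 0)"
      using c(1) unfolding R_eq by blast
    then obtain b where b: "\<And>j. j < d \<Longrightarrow> c j = (\<lambda>p. if p \<in> proj_points 1 then uni s (b j) p else 0)"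
      by metis
    have "w = (\<lambda>t. if t \<in> P1_power d then mpoly d s (\<lambda>m. \<Prod>j<d. b j (m j)) t else 0)"
    proof
      fix t show "w t = (if t \<in> P1_power d then mpoly d s (\<lambda>m. \<Prod>j<d. b j (m j)) t else 0)"
      proof (cases "t \<in> P1_power d")
        case True
        then have "\<forall>j<d. t j \<in> proj_points 1" by (auto simp: P1_power_def)
        then show ?thesis using True unfolding c(2) mpoly_prod_dep
          by (auto simp: P1_power_def b intro!: prod.cong)
      qed (simp add: c(2) P1_power_def)
    qed
    then show "w \<in> V d s" unfolding V_def by blast
  qed
  have EG: "E d s m \<in> G" if m: "m \<in> Mset d s" for m
  proof -
    define c where "c = (\<lambda>j p. if p \<in> proj_points 1 then uni s (\<lambda>k. if k = m j then 1 else 0) p else (0::'a))"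
    have "\<forall>j<d. c j \<in> eval_code 1 (proj_points 1) s"
    proof (intro allI impI)
      fix j assume "j < d"
      show "c j \<in> eval_code 1 (proj_points 1) s" unfolding R_eq c_def
        by (rule CollectI, rule exI[of _ "\<lambda>k. if k = m j then 1 else 0"]) simp
    qed
    moreover have "E d s m = (\<lambda>t. if t \<in> PiE {..<d} (\<lambda>_. proj_points 1) then (\<Prod>j<d. c j (t j)) else 0)"
    proof
      fix t show "E d s m t = (if t \<in> PiE {..<d} (\<lambda>_. proj_points 1) then (\<Prod>j<d. c j (t j)) else 0)"
      proof (cases "t \<in> PiE {..<d} (\<lambda>_. proj_points 1)")
        case True
        have "(\<Prod>j<d. phi s (m j) (t j)) = (\<Prod>j<d. c j (t j))"
        proof (rule prod.cong[OF refl])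
          fix j assume "j \<in> {..<d}"
          then have "t j \<in> proj_points 1" "m j \<le> s" using True m by (auto simp: Mset_def)
          then show "phi s (m j) (t j) = c j (t j)" by (simp add: c_def uni_delta)
        qed
        then show ?thesis using True by (simp add: E_def P1_power_def)
      qed (simp add: E_def P1_power_def)
    qed
    ultimately show ?thesis unfolding G_def by (intro CollectI exI[of _ c] conjI)
  qed
  have VG: "V d s \<subseteq> W.span G"
  proof
    fix w :: "(nat \<Rightarrow> nat \<Rightarrow> 'a) \<Rightarrow> 'a" assume "w \<in> V d s"
    then obtain a where "w = (\<lambda>t. if t \<in> P1_power d then mpoly d s a t else 0)" by (auto simp: V_def)
    then have "w = (\<Sum>m\<in>Mset d s. wscale (a m) (E d s m))" by (simp add: V_sum_E)
    also have "\<dots> \<in> W.span G"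
      by (intro W.span_sum W.span_scale W.span_base EG)
    finally show "w \<in> W.span G" .
  qed
  show ?thesis unfolding tp using W.span_minimal[OF GV V_subspace] VG by blast
qed




lemma bit_div_mod: "((k::nat) div 2 ^ n) mod 2 = 0 \<longleftrightarrow> \<not> bit k n"
  by (simp add: bit_iff_odd even_iff_mod_2_eq_zero)

definition idx :: "nat \<Rightarrow> nat set \<Rightarrow> nat" where
  "idx d S = horner_sum of_bool 2 (map (\<lambda>n. d - 1 - n \<notin> S) [0..<d])"

lemma bit_idx: "bit (idx d S) n \<longleftrightarrow> n < d \<and> d - 1 - n \<notin> S"
  by (auto simp: idx_def bit_horner_sum_bit_iff)

lemma take_bit_sum_nat: "take_bit n (k::nat) = (\<Sum>i<n. of_bool (bit k i) * 2 ^ i)"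
  by (simp add: take_bit_sum push_bit_eq_mult atLeast0LessThan)

lemma idx_less: "idx d S < 2 ^ d"
proof -
  have "take_bit d (idx d S) = idx d S"
    by (rule bit_eqI) (auto simp: bit_take_bit_iff bit_idx)
  then show ?thesis by (metis take_bit_nat_less_exp)
qed

lemma bits_le:
  assumes "(k::nat) < 2 ^ d" "k' < 2 ^ d" "\<And>n. n < d \<Longrightarrow> bit k' n \<Longrightarrow> bit k n"
  shows "k' \<le> k"
proof -
  have "k' = take_bit d k'" "k = take_bit d k" using assms(1,2) by (simp_all add: take_bit_nat_eq_self)
  moreover have "(\<Sum>i<d. of_bool (bit k' i) * 2 ^ i) \<le> (\<Sum>i<d. of_bool (bit k i) * (2::nat) ^ i)"
    by (rule sum_mono) (use assms(3) in auto)
  ultimately show ?thesis by (metis take_bit_sum_nat)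
qed

lemma segre_subset_idx: "S \<subseteq> {..<d} \<Longrightarrow> segre_subset d (idx d S) = S"
  unfolding segre_subset_def bit_div_mod bit_idx by auto

lemma segre_subset_sub: "segre_subset d k \<subseteq> {..<d}"
  by (auto simp: segre_subset_def)

lemma bit_not_in_segre: "j < d \<Longrightarrow> j \<notin> segre_subset d k \<longleftrightarrow> bit k (d - 1 - j)"
  unfolding segre_subset_def bit_div_mod by auto

lemma P1_cases: "p \<in> proj_points 1 \<Longrightarrow> p 0 = 1 \<or> (p 0 = 0 \<and> p 1 = 1)"
  unfolding P1_eq by (auto simp: pt_def ipt_def)

lemma P1_eqI: "x \<in> proj_points 1 \<Longrightarrow> y \<in> proj_points 1 \<Longrightarrow> x 0 = y 0 \<Longrightarrow> x 1 = y 1 \<Longrightarrow> x = y"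
  unfolding P1_eq by (auto simp: pt_def ipt_def fun_eq_iff)

definition S0 :: "nat \<Rightarrow> (nat \<Rightarrow> nat \<Rightarrow> 'a::field) \<Rightarrow> nat set" where
  "S0 d p = {j. j < d \<and> p j 0 = 1}"

lemma X_P1: "p \<in> P1_power d \<Longrightarrow> j < d \<Longrightarrow> p j \<in> proj_points 1"
  by (auto simp: P1_power_def)

lemma segre_k0:
  assumes p: "p \<in> P1_power d"
  shows "segre d p (idx d (S0 d p)) = 1"
proof -
  have ss: "segre_subset d (idx d (S0 d p)) = S0 d p"
    by (rule segre_subset_idx) (auto simp: S0_def)
  have "(\<Prod>j<d. if j \<in> S0 d p then p j 0 else p j 1) = (\<Prod>j<d. 1)"
  proof (rule prod.cong[OF refl])
    fix j assume "j \<in> {..<d}"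
    then show "(if j \<in> S0 d p then p j 0 else p j 1) = 1"
      using P1_cases[OF X_P1[OF p, of j]] by (auto simp: S0_def)
  qed
  then show ?thesis by (simp add: segre_def idx_less ss)
qed

lemma segre_below:
  assumes p: "p \<in> P1_power d" and k: "k < idx d (S0 d p)"
  shows "segre d p k = 0"
proof (rule ccontr)
  assume nz: "segre d p k \<noteq> 0"
  have kl: "k < 2 ^ d" using k idx_less[of d "S0 d p"] by simp
  then have "(\<Prod>j<d. if j \<in> segre_subset d k then p j 0 else p j 1) \<noteq> 0"
    using nz by (simp add: segre_def)
  then have f: "\<And>j. j < d \<Longrightarrow> (if j \<in> segre_subset d k then p j 0 else p j 1) \<noteq> 0"
    by (simp add: prod_zero_iff)
  have sub: "segre_subset d k \<subseteq> S0 d p"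
  proof
    fix j assume j: "j \<in> segre_subset d k"
    then have "j < d" by (auto simp: segre_subset_def)
    then have "p j 0 \<noteq> 0" using f[of j] j by simp
    then show "j \<in> S0 d p" using P1_cases[OF X_P1[OF p \<open>j < d\<close>]] \<open>j < d\<close> by (auto simp: S0_def)
  qed
  have "idx d (S0 d p) \<le> k"
  proof (rule bits_le[OF kl idx_less])
    fix n assume n: "n < d" "bit (idx d (S0 d p)) n"
    then have "d - 1 - n \<notin> S0 d p" by (simp add: bit_idx)
    then have "d - 1 - n \<notin> segre_subset d k" using sub by blast
    then have "bit k (d - 1 - (d - 1 - n))" using n(1) by (subst bit_not_in_segre[symmetric]) auto
    then show "bit k n" using n(1) by simp
  qed
  then show False using k by simp
qed

lemma segre_in:
  assumes p: "p \<in> P1_power d"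
  shows "segre d p \<in> proj_points (2 ^ d - 1)"
  unfolding proj_points_def
proof (intro CollectI conjI)
  show "\<forall>i>2 ^ d - 1. segre d p i = 0"
    by (auto simp: segre_def)
  have "idx d (S0 d p) \<le> 2 ^ d - 1" using idx_less[of d "S0 d p"] by simp
  moreover have "segre d p (idx d (S0 d p)) = 1" by (rule segre_k0[OF p])
  moreover have "\<forall>j<idx d (S0 d p). segre d p j = 0" using segre_below[OF p] by blast
  ultimately show "\<exists>i\<le>2 ^ d - 1. segre d p i = 1 \<and> (\<forall>j<i. segre d p j = 0)" by blast
qed

lemma proj_scale:
  assumes x: "x \<in> proj_points r" and y: "y \<in> proj_points r" and a: "a \<noteq> 0" and xy: "x = (\<lambda>k. a * y k)"
  shows "a = 1"
proof -
  obtain i where i: "i \<le> r" "y i = 1" "\<forall>j<i. y j = 0" using y by (auto simp: proj_points_def)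
  obtain i' where i': "i' \<le> r" "x i' = 1" "\<forall>j<i'. x j = 0" using x by (auto simp: proj_points_def)
  have "\<not> i' < i" using i'(2) i(3) xy by auto
  moreover have "\<not> i < i'" using i'(3) i(2) xy a by force
  ultimately have "i = i'" by simp
  then show "a = 1" using i i' xy by simp
qed

lemma SP_eq: "segre_points d = segre d ` P1_power d"
proof (intro set_eqI iffI)
  fix x :: "nat \<Rightarrow> 'a" assume "x \<in> segre_points d"
  then obtain p a where p: "x \<in> proj_points (2 ^ d - 1)" "p \<in> P1_power d" "a \<noteq> 0" "x = (\<lambda>k. a * segre d p k)"
    by (auto simp: segre_points_def)
  then have "a = 1" using proj_scale[OF p(1) segre_in[OF p(2)] p(3,4)] by simp
  then show "x \<in> segre d ` P1_power d" using p by auto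
next
  fix x :: "nat \<Rightarrow> 'a" assume "x \<in> segre d ` P1_power d"
  then obtain p where p: "p \<in> P1_power d" "x = segre d p" by auto
  then show "x \<in> segre_points d" unfolding segre_points_def
    using segre_in[OF p(1)] by (auto intro!: bexI[of _ p] exI[of _ 1])
qed

lemma segre_idx_val:
  assumes p: "p \<in> P1_power d" and j: "j \<in> S0 d p"
  shows "segre d p (idx d (S0 d p - {j})) = p j 1"
proof -
  have jd: "j < d" using j by (auto simp: S0_def)
  have ss: "segre_subset d (idx d (S0 d p - {j})) = S0 d p - {j}"
    by (rule segre_subset_idx) (auto simp: S0_def)
  have "(\<Prod>i<d. if i \<in> S0 d p - {j} then p i 0 else p i 1) = (\<Prod>i<d. if i = j then p j 1 else 1)"
  proof (rule prod.cong[OF refl])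
    fix i assume "i \<in> {..<d}"
    then show "(if i \<in> S0 d p - {j} then p i 0 else p i 1) = (if i = j then p j 1 else 1)"
      using P1_cases[OF X_P1[OF p, of i]] by (auto simp: S0_def)
  qed
  also have "\<dots> = p j 1" using jd by (simp add: prod.delta)
  finally show ?thesis by (simp add: segre_def idx_less ss)
qed

lemma segre_inj: "inj_on (segre d) (P1_power d :: (nat \<Rightarrow> nat \<Rightarrow> 'a::field) set)"
proof (rule inj_onI)
  fix p p' :: "nat \<Rightarrow> nat \<Rightarrow> 'a"
  assume p: "p \<in> P1_power d" and p': "p' \<in> P1_power d" and eq: "segre d p = segre d p'"
  have "\<not> idx d (S0 d p) < idx d (S0 d p')"
    using segre_below[OF p', of "idx d (S0 d p)"] segre_k0[OF p] eq by auto
  moreover have "\<not> idx d (S0 d p') < idx d (S0 d p)"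
    using segre_below[OF p, of "idx d (S0 d p')"] segre_k0[OF p'] eq by auto
  ultimately have "idx d (S0 d p) = idx d (S0 d p')" by simp
  then have "segre_subset d (idx d (S0 d p)) = segre_subset d (idx d (S0 d p'))" by simp
  moreover have "S0 d p \<subseteq> {..<d}" "S0 d p' \<subseteq> {..<d}" by (auto simp: S0_def)
  ultimately have S: "S0 d p = S0 d p'" by (simp add: segre_subset_idx)
  show "p = p'"
  proof
    fix j show "p j = p' j"
    proof (cases "j < d")
      case False
      then have "j \<notin> {..<d}" by simp
      then show ?thesis using PiE_arb[OF p[unfolded P1_power_def]] PiE_arb[OF p'[unfolded P1_power_def]] by metis
    next
      case True
      note c = P1_cases[OF X_P1[OF p True]] P1_cases[OF X_P1[OF p' True]]
      show ?thesis
      proof (cases "j \<in> S0 d p")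
        case True
        have j': "j \<in> S0 d p'" using True S by simp
        have "p j 1 = p' j 1"
          using segre_idx_val[OF p True] segre_idx_val[OF p' j'] S eq by metis
        moreover have "p j 0 = 1" "p' j 0 = 1" using True j' by (simp_all add: S0_def)
        ultimately show ?thesis using X_P1[OF p \<open>j < d\<close>] X_P1[OF p' \<open>j < d\<close>]
          by (intro P1_eqI) simp_all
      next
        case False
        have j': "j \<notin> S0 d p'" using False S by simp
        have "p j 0 = 0 \<and> p j 1 = 1" using False c(1) \<open>j < d\<close> by (auto simp: S0_def)
        moreover have "p' j 0 = 0 \<and> p' j 1 = 1" using j' c(2) \<open>j < d\<close> by (auto simp: S0_def)
        ultimately show ?thesis using X_P1[OF p \<open>j < d\<close>] X_P1[OF p' \<open>j < d\<close>]
          by (intro P1_eqI) simp_all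
      qed
    qed
  qed
qed




definition alpha :: "nat \<Rightarrow> (nat \<Rightarrow> nat) \<Rightarrow> nat \<Rightarrow> nat" where
  "alpha d e = (\<lambda>j. if j < d then (\<Sum>k \<in> {..2 ^ d - 1} \<inter> {k. j \<in> segre_subset d k}. e k) else undefined)"

definition Eprod :: "nat \<Rightarrow> nat \<Rightarrow> (nat \<Rightarrow> nat) \<Rightarrow> (nat \<Rightarrow> nat \<Rightarrow> 'a::field) \<Rightarrow> 'a" where
  "Eprod d s m t = (\<Prod>j<d. phi s (m j) (t j))"

lemma sum_split_filter:
  "finite A \<Longrightarrow> sum f A = sum f (A \<inter> {x. P x}) + sum f (A \<inter> - {x. P x})"
  using sum.If_cases[of A P f f] by simp

lemma mono_segre:
  fixes t :: "nat \<Rightarrow> nat \<Rightarrow> 'a::field"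
  assumes e: "e \<in> monomials (2 ^ d - 1) s"
  shows "(\<Prod>k\<le>2 ^ d - 1. segre d t k ^ e k) = Eprod d s (alpha d e) t"
proof -
  let ?r = "2 ^ d - 1 :: nat"
  have es: "(\<Sum>k\<le>?r. e k) = s" using e by (simp add: monomials_def)
  have "(\<Prod>k\<le>?r. segre d t k ^ e k) = (\<Prod>k\<le>?r. \<Prod>j<d. (if j \<in> segre_subset d k then t j 0 else t j 1) ^ e k)"
  proof (rule prod.cong[OF refl])
    fix k assume "k \<in> {..?r}"
    then have "k < 2 ^ d" by (simp add: less_eq_nat.simps) (metis Suc_pred atMost_iff le_imp_less_Suc pos2 zero_less_power)
    then show "segre d t k ^ e k = (\<Prod>j<d. (if j \<in> segre_subset d k then t j 0 else t j 1) ^ e k)"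
      by (simp add: segre_def prod_power_distrib)
  qed
  also have "\<dots> = (\<Prod>j<d. \<Prod>k\<le>?r. (if j \<in> segre_subset d k then t j 0 else t j 1) ^ e k)"
    by (rule prod.swap)
  also have "\<dots> = (\<Prod>j<d. phi s (alpha d e j) (t j))"
  proof (rule prod.cong[OF refl])
    fix j assume j: "j \<in> {..<d}"
    let ?A = "{..?r} \<inter> {k. j \<in> segre_subset d k}"
    let ?B = "{..?r} \<inter> - {k. j \<in> segre_subset d k}"
    have sAB: "sum e ?A + sum e ?B = s" using sum_split_filter[of "{..?r}" e] es by simp
    have "(\<Prod>k\<le>?r. (if j \<in> segre_subset d k then t j 0 else t j 1) ^ e k)
        = (\<Prod>k\<le>?r. if j \<in> segre_subset d k then t j 0 ^ e k else t j 1 ^ e k)"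
      by (rule prod.cong) auto
    also have "\<dots> = (\<Prod>k\<in>?A. t j 0 ^ e k) * (\<Prod>k\<in>?B. t j 1 ^ e k)"
      by (rule prod.If_cases) simp
    also have "\<dots> = t j 0 ^ sum e ?A * t j 1 ^ sum e ?B" by (simp add: power_sum)
    also have "\<dots> = phi s (alpha d e j) (t j)"
    proof -
      have B: "sum e ?B = s - sum e ?A" using sAB by simp
      have "alpha d e j = sum e ?A" using j by (simp add: alpha_def)
      then show ?thesis unfolding phi_def B by simp
    qed
    finally show "(\<Prod>k\<le>?r. (if j \<in> segre_subset d k then t j 0 else t j 1) ^ e k) = phi s (alpha d e j) (t j)" .
  qed
  finally show ?thesis by (simp add: Eprod_def)
qed

lemma monomial_le: "e \<in> monomials r s \<Longrightarrow> e i \<le> s"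
proof -
  assume e: "e \<in> monomials r s"
  show "e i \<le> s"
  proof (cases "i \<le> r")
    case True
    then have "e i \<le> (\<Sum>k\<le>r. e k)" by (intro member_le_sum) auto
    then show ?thesis using e by (simp add: monomials_def)
  next
    case False
    then show ?thesis using e by (simp add: monomials_def)
  qed
qed

lemma finite_monomials: "finite (monomials r s)"
proof (rule finite_subset)
  show "monomials r s \<subseteq> (\<lambda>f i. if i \<le> r then f i else 0) ` (PiE {..r} (\<lambda>_. {..s}))"
  proof
    fix e assume e: "e \<in> monomials r s"
    have "e = (\<lambda>i. if i \<le> r then restrict e {..r} i else 0)"
      using e by (auto simp: monomials_def fun_eq_iff)
    moreover have "restrict e {..r} \<in> PiE {..r} (\<lambda>_. {..s})" using monomial_le[OF e] by auto
    ultimately show "e \<in> (\<lambda>f i. if i \<le> r then f i else 0) ` (PiE {..r} (\<lambda>_. {..s}))" by blast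
  qed
qed (simp add: finite_PiE)

lemma alpha_Mset: "e \<in> monomials (2 ^ d - 1) s \<Longrightarrow> alpha d e \<in> Mset d s"
proof -
  assume e: "e \<in> monomials (2 ^ d - 1) s"
  have "alpha d e j \<le> s" if "j < d" for j
  proof -
    have "alpha d e j \<le> (\<Sum>k\<le>2 ^ d - 1. e k)" using that unfolding alpha_def
      by (simp add: sum_mono2)
    then show ?thesis using e by (simp add: monomials_def)
  qed
  then show ?thesis unfolding Mset_def by (intro PiE_I) (auto simp: alpha_def)
qed

lemma mpoly_Eprod: "mpoly d s a t = (\<Sum>m\<in>Mset d s. a m * Eprod d s m t)"
  by (simp add: mpoly_def Eprod_def)

definition agrp :: "nat \<Rightarrow> nat \<Rightarrow> ((nat \<Rightarrow> nat) \<Rightarrow> 'a::field) \<Rightarrow> (nat \<Rightarrow> nat) \<Rightarrow> 'a" where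
  "agrp d s c m = (\<Sum>e\<in>{e \<in> monomials (2 ^ d - 1) s. alpha d e = m}. c e)"

lemma hom_eval_segre:
  fixes t :: "nat \<Rightarrow> nat \<Rightarrow> 'a::field"
  shows "hom_eval (2 ^ d - 1) s c (segre d t) = mpoly d s (agrp d s c) t"
proof -
  have "hom_eval (2 ^ d - 1) s c (segre d t) = (\<Sum>e\<in>monomials (2 ^ d - 1) s. c e * Eprod d s (alpha d e) t)"
    unfolding hom_eval_def
  proof (rule sum.cong[OF refl])
    fix e assume e: "e \<in> monomials (2 ^ d - 1) s"
    show "c e * (\<Prod>i\<le>2 ^ d - 1. segre d t i ^ e i) = c e * Eprod d s (alpha d e) t"
      by (simp only: mono_segre[OF e])
  qed
  also have "\<dots> = (\<Sum>m\<in>Mset d s. \<Sum>e\<in>{e \<in> monomials (2 ^ d - 1) s. alpha d e = m}. c e * Eprod d s (alpha d e) t)"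
    by (rule sum.group[symmetric]) (auto simp: finite_monomials finite_Mset alpha_Mset)
  also have "\<dots> = (\<Sum>m\<in>Mset d s. agrp d s c m * Eprod d s m t)"
    unfolding agrp_def sum_distrib_right by (rule sum.cong[OF refl], rule sum.cong) auto
  finally show ?thesis by (simp add: mpoly_Eprod)
qed

definition iota :: "nat \<Rightarrow> (nat \<Rightarrow> nat) \<Rightarrow> nat \<Rightarrow> nat" where
  "iota d m i = idx d {j. j < d \<and> i < m j}"

definition em :: "nat \<Rightarrow> nat \<Rightarrow> (nat \<Rightarrow> nat) \<Rightarrow> nat \<Rightarrow> nat" where
  "em d s m = (\<lambda>k. \<Sum>i<s. if k = iota d m i then 1 else 0)"

lemma iota_le: "iota d m i \<le> 2 ^ d - 1"
  using idx_less[of d "{j. j < d \<and> i < m j}"] by (simp add: iota_def)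

lemma em_mon: "em d s m \<in> monomials (2 ^ d - 1) s"
proof -
  have "\<forall>k>2 ^ d - 1. em d s m k = 0"
    using iota_le[of d m] by (auto simp: em_def intro!: sum.neutral) (metis not_le)
  moreover have "(\<Sum>k\<le>2 ^ d - 1. em d s m k) = s"
  proof -
    have "(\<Sum>k\<le>2 ^ d - 1. em d s m k) = (\<Sum>i<s. \<Sum>k\<le>2 ^ d - 1. if k = iota d m i then 1 else 0)"
      unfolding em_def by (rule sum.swap)
    also have "\<dots> = (\<Sum>i<s. 1)"
      by (rule sum.cong[OF refl]) (use iota_le in simp)
    finally show ?thesis by simp
  qed
  ultimately show ?thesis by (simp add: monomials_def)
qed

lemma alpha_em: "m \<in> Mset d s \<Longrightarrow> alpha d (em d s m) = m"
proof
  fix j assume m: "m \<in> Mset d s"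
  show "alpha d (em d s m) j = m j"
  proof (cases "j < d")
    case False
    then show ?thesis using m by (auto simp: alpha_def Mset_def PiE_def extensional_def)
  next
    case True
    have mj: "m j \<le> s" using m True by (auto simp: Mset_def)
    let ?A = "{..2 ^ d - 1} \<inter> {k. j \<in> segre_subset d k}"
    have mem: "iota d m i \<in> ?A \<longleftrightarrow> i < m j" for i
    proof -
      have "segre_subset d (iota d m i) = {j. j < d \<and> i < m j}"
        unfolding iota_def by (rule segre_subset_idx) auto
      then show ?thesis using True iota_le[of d m i] by auto
    qed
    have "alpha d (em d s m) j = (\<Sum>k\<in>?A. \<Sum>i<s. if k = iota d m i then 1 else 0)"
      using True by (simp add: alpha_def em_def)
    also have "\<dots> = (\<Sum>i<s. \<Sum>k\<in>?A. if k = iota d m i then 1 else 0)" by (rule sum.swap)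
    also have "\<dots> = (\<Sum>i<s. if i < m j then 1 else 0)"
    proof (rule sum.cong[OF refl])
      fix i
      have "(\<Sum>k\<in>?A. if k = iota d m i then 1 else 0) = (if iota d m i \<in> ?A then 1 else (0::nat))"
        by (rule sum.delta) simp
      then show "(\<Sum>k\<in>?A. if k = iota d m i then 1 else 0) = (if i < m j then 1 else (0::nat))"
        unfolding mem .
    qed
    also have "\<dots> = card {i. i < s \<and> i < m j}"
      by (simp add: sum.If_cases Int_def)
    also have "{i. i < s \<and> i < m j} = {..<m j}" using mj by auto
    finally show ?thesis by simp
  qed
qed

lemma hom_eval_delta:
  assumes "e0 \<in> monomials r s"
  shows "hom_eval r s (\<lambda>e. if e = e0 then 1 else 0) x = (\<Prod>i\<le>r. x i ^ e0 i)"
  unfolding hom_eval_def using assms finite_monomials[of r s]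
  by (simp add: if_distrib[of "\<lambda>c. c * _"] sum.delta' cong: if_cong)

lemma hom_eval_lin:
  "hom_eval r s (\<lambda>e. \<Sum>m\<in>M. a m * g m e) x = (\<Sum>m\<in>M. a m * hom_eval r s (g m) x)"
  unfolding hom_eval_def by (simp add: sum_distrib_left sum_distrib_right sum.swap[of _ M] mult.assoc)




context
  fixes d s :: nat and TY :: "'a::{finite,field} itself"
begin

abbreviation "X \<equiv> (P1_power d :: (nat \<Rightarrow> nat \<Rightarrow> 'a) set)"
abbreviation "SP \<equiv> (segre_points d :: (nat \<Rightarrow> 'a) set)"
definition "sig = the_inv_into X (segre d)"

lemma SP_bij: "bij_betw (segre d) X SP"
  unfolding bij_betw_def using segre_inj SP_eq by blast

lemma sig_bij: "bij_betw sig SP X"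
  unfolding sig_def by (rule bij_betw_the_inv_into[OF SP_bij])

lemma sig_segre: "t \<in> X \<Longrightarrow> sig (segre d t) = t"
  unfolding sig_def by (rule the_inv_into_f_f[OF segre_inj])

lemma segre_sig: "x \<in> SP \<Longrightarrow> segre d (sig x) = x \<and> sig x \<in> X"
  using sig_bij SP_eq unfolding sig_def
  by (metis bij_betw_apply f_the_inv_into_f segre_inj)

definition Ca :: "((nat \<Rightarrow> nat) \<Rightarrow> 'a) \<Rightarrow> (nat \<Rightarrow> 'a) \<Rightarrow> 'a" where
  "Ca a = (\<lambda>x. if x \<in> SP then mpoly d s a (sig x) else 0)"

lemma code_eq: "eval_code (2 ^ d - 1) SP s = range Ca"
proof (intro set_eqI iffI)
  fix w assume "w \<in> eval_code (2 ^ d - 1) SP s"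
  then obtain c where c: "w = (\<lambda>x. if x \<in> SP then hom_eval (2 ^ d - 1) s c x else 0)"
    unfolding eval_code_def by blast
  have "w = Ca (agrp d s c)"
  proof
    fix x show "w x = Ca (agrp d s c) x"
    proof (cases "x \<in> SP")
      case True
      then have "hom_eval (2 ^ d - 1) s c x = hom_eval (2 ^ d - 1) s c (segre d (sig x))"
        using segre_sig by simp
      then show ?thesis using True hom_eval_segre[of d s c "sig x"] by (simp add: c Ca_def)
    qed (simp add: c Ca_def)
  qed
  then show "w \<in> range Ca" by blast
next
  fix w assume "w \<in> range Ca"
  then obtain a where a: "w = Ca a" by blast
  define c where "c = (\<lambda>e. \<Sum>m\<in>Mset d s. a m * (if e = em d s m then 1 else (0::'a)))"
  have "w = (\<lambda>x. if x \<in> SP then hom_eval (2 ^ d - 1) s c x else 0)"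
  proof
    fix x show "w x = (if x \<in> SP then hom_eval (2 ^ d - 1) s c x else 0)"
    proof (cases "x \<in> SP")
      case True
      then have xs: "segre d (sig x) = x" "sig x \<in> X" using segre_sig by auto
      have "hom_eval (2 ^ d - 1) s c x = (\<Sum>m\<in>Mset d s. a m * hom_eval (2 ^ d - 1) s (\<lambda>e. if e = em d s m then 1 else 0) x)"
        unfolding c_def by (rule hom_eval_lin)
      also have "\<dots> = (\<Sum>m\<in>Mset d s. a m * Eprod d s m (sig x))"
      proof (rule sum.cong[OF refl])
        fix m assume m: "m \<in> Mset d s"
        have "hom_eval (2 ^ d - 1) s (\<lambda>e. if e = em d s m then 1 else 0) x = (\<Prod>i\<le>2 ^ d - 1. x i ^ em d s m i)"
          by (rule hom_eval_delta[OF em_mon])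
        also have "\<dots> = (\<Prod>i\<le>2 ^ d - 1. segre d (sig x) i ^ em d s m i)" using xs by simp
        also have "\<dots> = Eprod d s (alpha d (em d s m)) (sig x)" by (rule mono_segre[OF em_mon])
        also have "\<dots> = Eprod d s m (sig x)" using alpha_em[OF m] by simp
        finally show "a m * hom_eval (2 ^ d - 1) s (\<lambda>e. if e = em d s m then 1 else 0) x = a m * Eprod d s m (sig x)" by simp
      qed
      finally show ?thesis using True by (simp add: a Ca_def mpoly_Eprod)
    qed (simp add: a Ca_def)
  qed
  then show "w \<in> eval_code (2 ^ d - 1) SP s" unfolding eval_code_def by blast
qed

lemma tensor_code: "{(\<lambda>x. if x \<in> SP then w (sig x) else 0) | w.
                 w \<in> tensor_power d (proj_points 1) (eval_code 1 (proj_points 1 :: (nat \<Rightarrow> 'a) set) s)} = range Ca"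
proof -
  have h: "(\<lambda>x. if x \<in> SP then (\<lambda>t. if t \<in> X then mpoly d s a t else 0) (sig x) else 0) = Ca a" for a
    using segre_sig by (auto simp: Ca_def fun_eq_iff)
  show ?thesis
  proof (intro set_eqI iffI)
    fix v assume "v \<in> {(\<lambda>x. if x \<in> SP then w (sig x) else 0) | w.
                 w \<in> tensor_power d (proj_points 1) (eval_code 1 (proj_points 1 :: (nat \<Rightarrow> 'a) set) s)}"
    then obtain w where "v = (\<lambda>x. if x \<in> SP then w (sig x) else 0)" "w \<in> V d s"
      unfolding tensor_eq by blast
    then obtain a where "v = (\<lambda>x. if x \<in> SP then (\<lambda>t. if t \<in> X then mpoly d s a t else 0) (sig x) else 0)"
      unfolding V_def by blast
    then show "v \<in> range Ca" using h by blast
  next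
    fix v assume "v \<in> range Ca"
    then obtain a where "v = Ca a" by blast
    define w0 where "w0 = (\<lambda>t. if t \<in> X then mpoly d s a t else 0)"
    have "v = (\<lambda>x. if x \<in> SP then w0 (sig x) else 0)"
      using h[of a] \<open>v = Ca a\<close> unfolding w0_def by simp
    moreover have "w0 \<in> V d s" unfolding V_def w0_def by blast
    ultimately show "v \<in> {(\<lambda>x. if x \<in> SP then w (sig x) else 0) | w.
                 w \<in> tensor_power d (proj_points 1) (eval_code 1 (proj_points 1 :: (nat \<Rightarrow> 'a) set) s)}"
      unfolding tensor_eq by blast
  qed
qed

definition g :: "(nat \<Rightarrow> nat) \<Rightarrow> (nat \<Rightarrow> 'a) \<Rightarrow> 'a" where
  "g m = (\<lambda>x. if x \<in> SP then Eprod d s m (sig x) else 0)"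

lemma Ca_sum: "Ca a = (\<Sum>m\<in>Mset d s. wscale (a m) (g m))"
  by (rule ext) (simp add: sum_fun_apply wscale_def g_def Ca_def mpoly_Eprod sum.If_cases if_distrib cong: if_cong)

lemma segre_SP: "t \<in> X \<Longrightarrow> segre d t \<in> SP"
  unfolding SP_eq by (rule imageI)

lemma Ca_segre: "t \<in> X \<Longrightarrow> Ca a (segre d t) = mpoly d s a t"
  using sig_segre[of t] segre_SP[of t] unfolding Ca_def by simp

lemma Ca_zero:
  assumes s: "s \<le> card (UNIV :: 'a set)" and z: "Ca a = 0"
  shows "\<forall>m\<in>Mset d s. a m = 0"
proof (rule mpoly_indep[OF s])
  show "\<forall>t\<in>X. mpoly d s a t = 0"
  proof
    fix t assume "t \<in> X"
    then have "mpoly d s a t = Ca a (segre d t)" using Ca_segre by simp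
    also have "\<dots> = 0" using z by simp
    finally show "mpoly d s a t = 0" .
  qed
qed

lemma g_Ca: "m \<in> Mset d s \<Longrightarrow> g m = Ca (\<lambda>m'. if m' = m then 1 else 0)"
proof -
  assume m: "m \<in> Mset d s"
  have "Ca (\<lambda>m'. if m' = m then 1 else 0) = (\<Sum>ma\<in>Mset d s. if ma = m then g ma else 0)"
    unfolding Ca_sum by (rule sum.cong) (auto simp: wscale_def)
  also have "\<dots> = g m" using m finite_Mset by simp
  finally show ?thesis by simp
qed

lemma Ca_diff: "Ca (\<lambda>m. a m - b m) = Ca a - Ca b"
  by (rule ext) (simp add: Ca_def mpoly_def left_diff_distrib sum_subtractf)

lemma g_inj:
  assumes s: "s \<le> card (UNIV :: 'a set)"
  shows "inj_on g (Mset d s)"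
proof (rule inj_onI, rule ccontr)
  fix m1 m2 assume m: "m1 \<in> Mset d s" "m2 \<in> Mset d s" "g m1 = g m2" "m1 \<noteq> m2"
  let ?a = "\<lambda>m. (if m = m1 then 1 else 0) - (if m = m2 then 1 else (0::'a))"
  have "Ca ?a = 0" using m g_Ca Ca_diff[of "\<lambda>m. if m = m1 then 1 else 0" "\<lambda>m. if m = m2 then 1 else 0"]
    by simp
  then have "?a m1 = 0" using Ca_zero[OF s] m(1) by blast
  then show False using m(4) by simp
qed

lemma range_Ca_span: "s \<le> card (UNIV :: 'a set) \<Longrightarrow> range Ca = W.span (g ` Mset d s)"
proof (intro set_eqI iffI)
  fix w assume "w \<in> range Ca"
  then obtain a where w: "w = Ca a" by blast
  have "Ca a \<in> W.span (g ` Mset d s)" unfolding Ca_sum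
    by (intro W.span_sum W.span_scale W.span_base imageI)
  then show "w \<in> W.span (g ` Mset d s)" using w by simp
next
  fix w assume s: "s \<le> card (UNIV :: 'a set)" and "w \<in> W.span (g ` Mset d s)"
  then obtain u where "w = (\<Sum>v\<in>g ` Mset d s. wscale (u v) v)"
    using W.span_finite[of "g ` Mset d s"] finite_Mset by auto
  also have "\<dots> = (\<Sum>m\<in>Mset d s. wscale (u (g m)) (g m))"
    using sum.reindex[OF g_inj[OF s], of "\<lambda>v. wscale (u v) v"] by (simp add: comp_def)
  also have "\<dots> = Ca (\<lambda>m. u (g m))" by (simp add: Ca_sum)
  finally show "w \<in> range Ca" by blast
qed

lemma g_indep:
  assumes s: "s \<le> card (UNIV :: 'a set)"
  shows "W.independent (g ` Mset d s)"
proof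
  assume "W.dependent (g ` Mset d s)"
  then obtain u where u: "\<exists>v\<in>g ` Mset d s. u v \<noteq> 0" "(\<Sum>v\<in>g ` Mset d s. wscale (u v) v) = 0"
    using W.dependent_finite[of "g ` Mset d s"] finite_Mset by auto
  have "(\<Sum>v\<in>g ` Mset d s. wscale (u v) v) = (\<Sum>m\<in>Mset d s. wscale (u (g m)) (g m))"
    using sum.reindex[OF g_inj[OF s], of "\<lambda>v. wscale (u v) v"] by (simp add: comp_def)
  also have "\<dots> = Ca (\<lambda>m. u (g m))" by (simp add: Ca_sum)
  finally have "Ca (\<lambda>m. u (g m)) = 0" using u(2) by simp
  then have "\<forall>m\<in>Mset d s. u (g m) = 0" by (rule Ca_zero[OF s])
  then show False using u(1) by auto
qed

lemma dim_code: "s \<le> card (UNIV :: 'a set) \<Longrightarrow> W.dim (range Ca) = (s + 1) ^ d"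
  using range_Ca_span W.dim_span_eq_card_independent[OF g_indep] card_image[OF g_inj] card_Mset
  by simp

lemma weight_Ca: "weight (Ca a) = card {t \<in> X. mpoly d s a t \<noteq> 0}"
proof -
  have "{x. Ca a x \<noteq> 0} = {x \<in> SP. mpoly d s a (sig x) \<noteq> 0}" by (auto simp: Ca_def)
  moreover have "sig ` {x \<in> SP. mpoly d s a (sig x) \<noteq> 0} = {t \<in> X. mpoly d s a t \<noteq> 0}"
  proof (intro set_eqI iffI)
    fix t assume "t \<in> sig ` {x \<in> SP. mpoly d s a (sig x) \<noteq> 0}"
    then obtain x where x: "x \<in> SP" "mpoly d s a (sig x) \<noteq> 0" "t = sig x" by blast
    then show "t \<in> {t \<in> X. mpoly d s a t \<noteq> 0}" using segre_sig[OF x(1)] by simp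
  next
    fix t assume t: "t \<in> {t \<in> X. mpoly d s a t \<noteq> 0}"
    have tX: "t \<in> X" and tm: "mpoly d s a t \<noteq> 0" using t by auto
    have s1: "segre d t \<in> SP" by (rule segre_SP[OF tX])
    have s2: "sig (segre d t) = t" by (rule sig_segre[OF tX])
    have "segre d t \<in> {x \<in> SP. mpoly d s a (sig x) \<noteq> 0}" 
    proof (intro CollectI conjI)
      show "segre d t \<in> SP" by (rule s1)
      show "mpoly d s a (sig (segre d t)) \<noteq> 0" unfolding s2 by (rule tm)
    qed
    then have "sig (segre d t) \<in> sig ` {x \<in> SP. mpoly d s a (sig x) \<noteq> 0}" by (rule imageI)
    then show "t \<in> sig ` {x \<in> SP. mpoly d s a (sig x) \<noteq> 0}" unfolding s2 .
  qed
  moreover have "inj_on sig {x \<in> SP. mpoly d s a (sig x) \<noteq> 0}"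
    by (rule inj_on_subset[OF bij_betw_imp_inj_on[OF sig_bij]]) blast
  then have "card (sig ` {x \<in> SP. mpoly d s a (sig x) \<noteq> 0}) = card {x \<in> SP. mpoly d s a (sig x) \<noteq> 0}"
    by (rule card_image)
  ultimately show ?thesis unfolding weight_def by simp
qed

lemma Ca_nz: "Ca a \<noteq> 0 \<longleftrightarrow> (\<exists>t\<in>X. mpoly d s a t \<noteq> 0)"
proof
  assume "Ca a \<noteq> 0"
  then obtain x where x: "Ca a x \<noteq> 0" by (auto simp: fun_eq_iff)
  then have "x \<in> SP" by (auto simp: Ca_def split: if_splits)
  then have "sig x \<in> X" "mpoly d s a (sig x) \<noteq> 0" using segre_sig[of x] x by (auto simp: Ca_def)
  then show "\<exists>t\<in>X. mpoly d s a t \<noteq> 0" by blast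
next
  assume "\<exists>t\<in>X. mpoly d s a t \<noteq> 0"
  then obtain t where "t \<in> X" "mpoly d s a t \<noteq> 0" by blast
  then have "Ca a (segre d t) \<noteq> 0" using Ca_segre by simp
  then show "Ca a \<noteq> 0" by auto
qed

lemma mindist_code:
  assumes s: "s < card (UNIV :: 'a set)"
  shows "min_dist (range Ca) = (card (UNIV :: 'a set) - s + 1) ^ d"
proof -
  let ?W = "{weight w | w. w \<in> range Ca \<and> w \<noteq> 0}"
  have eqq: "card (UNIV :: 'a set) - s + 1 = card (UNIV :: 'a set) + 1 - s" using s by simp
  have lb: "(card (UNIV :: 'a set) + 1 - s) ^ d \<le> n" if "n \<in> ?W" for n
  proof -
    obtain a where na: "n = weight (Ca a)" "Ca a \<noteq> 0" using \<open>n \<in> ?W\<close> by auto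
    then obtain t where "t \<in> X" "mpoly d s a t \<noteq> 0" using Ca_nz by blast
    then have "(card (UNIV :: 'a set) + 1 - s) ^ d \<le> card {t \<in> X. mpoly d s a t \<noteq> 0}"
      by (rule mpoly_weight)
    then show ?thesis using na(1) weight_Ca by simp
  qed
  obtain a where a: "\<exists>t\<in>X. mpoly d s a t \<noteq> 0"
    "card {t \<in> X. mpoly d s a t \<noteq> 0} \<le> (card (UNIV :: 'a set) + 1 - s) ^ d"
    using exists_min_word[OF s, of d] by blast
  have mem: "weight (Ca a) \<in> ?W" using a(1) Ca_nz by blast
  have eqw: "weight (Ca a) = (card (UNIV :: 'a set) + 1 - s) ^ d"
    using lb[OF mem] a(2) weight_Ca by simp
  have fin: "finite ?W"
  proof (rule finite_subset)
    show "?W \<subseteq> {..card X}"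
    proof
      fix n assume "n \<in> ?W"
      then obtain a' where "n = weight (Ca a')" by blast
      then have "n = card {t \<in> X. mpoly d s a' t \<noteq> 0}" using weight_Ca by simp
      moreover have "card {t \<in> X. mpoly d s a' t \<noteq> 0} \<le> card X"
        by (rule card_mono[OF finite_X]) blast
      ultimately show "n \<in> {..card X}" by simp
    qed
  qed simp
  have "Min ?W = (card (UNIV :: 'a set) + 1 - s) ^ d"
    by (rule Min_eqI[OF fin]) (use lb mem eqw in auto)
  then show ?thesis unfolding min_dist_def eqq .
qed

end




theorem theorem4p1:
  fixes d s :: nat
  assumes "d \<ge> 2" and "s < card (UNIV :: 'a::{finite,field} set)"
  shows "card (segre_points d :: (nat \<Rightarrow> 'a) set) = (card (UNIV :: 'a set) + 1) ^ d
     \<and> code_dim (eval_code (2 ^ d - 1) (segre_points d :: (nat \<Rightarrow> 'a) set) s) = (s + 1) ^ d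
     \<and> min_dist (eval_code (2 ^ d - 1) (segre_points d :: (nat \<Rightarrow> 'a) set) s) = (card (UNIV :: 'a set) - s + 1) ^ d
     \<and> (\<exists>\<sigma>. bij_betw \<sigma> (segre_points d :: (nat \<Rightarrow> 'a) set) (P1_power d)
          \<and> eval_code (2 ^ d - 1) (segre_points d :: (nat \<Rightarrow> 'a) set) s
            = {(\<lambda>x. if x \<in> segre_points d then w (\<sigma> x) else 0) | w.
                 w \<in> tensor_power d (proj_points 1) (eval_code 1 (proj_points 1 :: (nat \<Rightarrow> 'a) set) s)})"
proof (intro conjI)
  have s: "s \<le> card (UNIV :: 'a set)" using assms(2) by simp
  show "card (segre_points d :: (nat \<Rightarrow> 'a) set) = (card (UNIV :: 'a set) + 1) ^ d"
  proof -
    have "card (segre_points d :: (nat \<Rightarrow> 'a) set) = card (P1_power d :: (nat \<Rightarrow> nat \<Rightarrow> 'a) set)"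
      unfolding SP_eq by (rule card_image[OF segre_inj])
    then show ?thesis by (simp only: card_X)
  qed
  show "code_dim (eval_code (2 ^ d - 1) (segre_points d :: (nat \<Rightarrow> 'a) set) s) = (s + 1) ^ d"
    unfolding code_dim_def code_eq using dim_code[OF s] .
  show "min_dist (eval_code (2 ^ d - 1) (segre_points d :: (nat \<Rightarrow> 'a) set) s) = (card (UNIV :: 'a set) - s + 1) ^ d"
    unfolding code_eq using mindist_code[OF assms(2)] .
  show "\<exists>\<sigma>. bij_betw \<sigma> (segre_points d :: (nat \<Rightarrow> 'a) set) (P1_power d)
          \<and> eval_code (2 ^ d - 1) (segre_points d :: (nat \<Rightarrow> 'a) set) s
            = {(\<lambda>x. if x \<in> segre_points d then w (\<sigma> x) else 0) | w.
                 w \<in> tensor_power d (proj_points 1) (eval_code 1 (proj_points 1 :: (nat \<Rightarrow> 'a) set) s)}"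
  proof (intro exI conjI)
    show "bij_betw (sig d) (segre_points d :: (nat \<Rightarrow> 'a) set) (P1_power d)" by (rule sig_bij)
    show "eval_code (2 ^ d - 1) (segre_points d :: (nat \<Rightarrow> 'a) set) s
            = {(\<lambda>x. if x \<in> segre_points d then w (sig d x) else 0) | w.
                 w \<in> tensor_power d (proj_points 1) (eval_code 1 (proj_points 1 :: (nat \<Rightarrow> 'a) set) s)}"
      unfolding code_eq tensor_code ..
  qed
qed


end
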